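(* Let $\Delta\ge 1$ be an integer. There exists a $4$-$\gamma_t$-critical graph $G$ of order $\Delta(G)+4$ with $\Delta(G)=\Delta$ and $\delta(G)\ge 2$ if and only if $\Delta\in\{2,4,6,8\}$ or $\Delta\ge 9$.
   Context: All graphs are finite and simple; $\Delta(G)$, $\delta(G)$ are maximum and minimum degree. A set $S\subseteq V(G)$ is a total dominating set if every vertex of $G$ is adjacent to some vertex of $S$; $\gamma_t(G)$ is the minimum size of such a set. A leaf is a vertex of degree one. A graph $G$ with no isolated vertex is $\gamma_t$-critical if for every vertex $v$ not adjacent to a leaf, $\gamma_t(G-v)<\gamma_t(G)$; it is $m$-$\gamma_t$-critical if moreover $\gamma_t(G)=m$. *)

theory Defs
  imports Main
begin

text \<open>Finite simple graphs on a vertex set V of naturals (every finite graph is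
isomorphic to one of these), with symmetric irreflexive adjacency E restricted to V.\<close>

definition simple_graph :: "nat set \<Rightarrow> (nat \<Rightarrow> nat \<Rightarrow> bool) \<Rightarrow> bool" where
  "simple_graph V E \<longleftrightarrow> finite V \<and> (\<forall>u v. E u v \<longrightarrow> u \<in> V \<and> v \<in> V)
     \<and> (\<forall>u v. E u v \<longrightarrow> E v u) \<and> (\<forall>v. \<not> E v v)"

definition degree :: "nat set \<Rightarrow> (nat \<Rightarrow> nat \<Rightarrow> bool) \<Rightarrow> nat \<Rightarrow> nat" where
  "degree V E v = card {u \<in> V. E v u}"

definition max_degree :: "nat set \<Rightarrow> (nat \<Rightarrow> nat \<Rightarrow> bool) \<Rightarrow> nat" where
  "max_degree V E = Max (degree V E ` V)"

definition min_degree :: "nat set \<Rightarrow> (nat \<Rightarrow> nat \<Rightarrow> bool) \<Rightarrow> nat" where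
  "min_degree V E = Min (degree V E ` V)"

definition is_leaf :: "nat set \<Rightarrow> (nat \<Rightarrow> nat \<Rightarrow> bool) \<Rightarrow> nat \<Rightarrow> bool" where
  "is_leaf V E v \<longleftrightarrow> v \<in> V \<and> degree V E v = 1"

definition no_isolated :: "nat set \<Rightarrow> (nat \<Rightarrow> nat \<Rightarrow> bool) \<Rightarrow> bool" where
  "no_isolated V E \<longleftrightarrow> (\<forall>v \<in> V. \<exists>u \<in> V. E v u)"

definition total_dominating :: "nat set \<Rightarrow> (nat \<Rightarrow> nat \<Rightarrow> bool) \<Rightarrow> nat set \<Rightarrow> bool" where
  "total_dominating V E S \<longleftrightarrow> S \<subseteq> V \<and> (\<forall>v \<in> V. \<exists>u \<in> S. E v u)"

definition gamma_t :: "nat set \<Rightarrow> (nat \<Rightarrow> nat \<Rightarrow> bool) \<Rightarrow> nat" where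
  "gamma_t V E = (LEAST n. \<exists>S. total_dominating V E S \<and> card S = n)"

definition del_vertex_edges :: "(nat \<Rightarrow> nat \<Rightarrow> bool) \<Rightarrow> nat \<Rightarrow> (nat \<Rightarrow> nat \<Rightarrow> bool)" where
  "del_vertex_edges E v = (\<lambda>a b. E a b \<and> a \<noteq> v \<and> b \<noteq> v)"

definition gamma_t_critical :: "nat set \<Rightarrow> (nat \<Rightarrow> nat \<Rightarrow> bool) \<Rightarrow> bool" where
  "gamma_t_critical V E \<longleftrightarrow> no_isolated V E \<and>
     (\<forall>v \<in> V. (\<not> (\<exists>u. E v u \<and> is_leaf V E u)) \<longrightarrow>
        gamma_t (V - {v}) (del_vertex_edges E v) < gamma_t V E)"

definition m_gamma_t_critical :: "nat \<Rightarrow> nat set \<Rightarrow> (nat \<Rightarrow> nat \<Rightarrow> bool) \<Rightarrow> bool" where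
  "m_gamma_t_critical m V E \<longleftrightarrow> gamma_t_critical V E \<and> gamma_t V E = m"

end

theory Submission
  imports Defs
begin

lemma gamma_t_le: "total_dominating V E S \<Longrightarrow> gamma_t V E \<le> card S"
  unfolding gamma_t_def by (rule Least_le) blast

lemma gamma_t_eqI:
  assumes "total_dominating V E S0" "card S0 = m" "\<And>S. total_dominating V E S \<Longrightarrow> m \<le> card S"
  shows "gamma_t V E = m"
  unfolding gamma_t_def
  by (rule Least_equality) (use assms in auto)

lemma gamma_t_witness:
  assumes "total_dominating V E S"
  shows "\<exists>S'. total_dominating V E S' \<and> card S' = gamma_t V E"
  unfolding gamma_t_def by (rule LeastI_ex) (use assms in blast)

lemma card3: "card {p,q,r::nat} \<le> 3"
  by (simp add: card_insert_if)

definition half :: "nat set \<Rightarrow> nat set \<Rightarrow> (nat \<Rightarrow> nat \<Rightarrow> bool) \<Rightarrow> bool" where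
 "half X Y E \<longleftrightarrow> (\<forall>p\<in>X. \<exists>t\<in>Y. \<not> E p t) \<and>
   (\<forall>p\<in>X. \<forall>t\<in>Y. E p t \<longrightarrow> (\<exists>y\<in>Y. \<not> E y p \<and> \<not> E y t)) \<and>
   (\<forall>s\<in>X. \<exists>t\<in>Y. \<not> E s t \<and> ((\<forall>x\<in>X. x \<noteq> s \<longrightarrow> E x t) \<or>
       (\<exists>q\<in>X. q \<noteq> s \<and> \<not> E s q \<and> E q t \<and> (\<forall>x\<in>X. x \<noteq> s \<longrightarrow> E x t \<or> E x q))))"

definition struct :: "nat set \<Rightarrow> (nat \<Rightarrow> nat \<Rightarrow> bool) \<Rightarrow> nat \<Rightarrow> nat \<Rightarrow> nat \<Rightarrow> nat \<Rightarrow> nat set \<Rightarrow> nat set \<Rightarrow> bool" where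
 "struct V E v a b c X Y \<longleftrightarrow> simple_graph V E \<and> V = {v,a,b,c} \<union> X \<union> Y \<and> distinct [v,a,b,c]
   \<and> X \<inter> Y = {} \<and> v \<notin> X \<union> Y \<and> a \<notin> X \<union> Y \<and> b \<notin> X \<union> Y \<and> c \<notin> X \<union> Y
   \<and> (\<forall>u. E v u \<longleftrightarrow> u \<in> X \<union> Y) \<and> (\<forall>u. E a u \<longleftrightarrow> u = c \<or> u \<in> X)
   \<and> (\<forall>u. E b u \<longleftrightarrow> u = c \<or> u \<in> Y) \<and> (\<forall>u. E c u \<longleftrightarrow> u = a \<or> u = b)"

lemma struct_swap: "struct V E v a b c X Y \<Longrightarrow> struct V E v b a c Y X"
  unfolding struct_def by auto

lemma struct_sg: "struct V E v a b c X Y \<Longrightarrow> simple_graph V E"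
  unfolding struct_def by (elim conjE)

lemma struct_sym: "struct V E v a b c X Y \<Longrightarrow> E x y \<longleftrightarrow> E y x"
  using struct_sg unfolding simple_graph_def by blast

lemma structS:
  assumes "struct V E v a b c X Y"
  shows "\<And>x y. E x y \<Longrightarrow> E y x" "\<And>x. \<not> E x x" "\<And>x y. E x y \<Longrightarrow> x \<in> V \<and> y \<in> V"
  using struct_sg[OF assms] unfolding simple_graph_def by blast+

lemma structD:
  assumes st: "struct V E v a b c X Y"
  shows "finite V" "V = {v,a,b,c} \<union> X \<union> Y" "v \<noteq> a" "v \<noteq> b" "v \<noteq> c" "a \<noteq> b" "a \<noteq> c" "b \<noteq> c"
    "X \<inter> Y = {}" "v \<notin> X" "v \<notin> Y" "a \<notin> X" "a \<notin> Y" "b \<notin> X" "b \<notin> Y" "c \<notin> X" "c \<notin> Y"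
    "\<And>u. E v u \<longleftrightarrow> u \<in> X \<union> Y" "\<And>u. E a u \<longleftrightarrow> u = c \<or> u \<in> X"
    "\<And>u. E b u \<longleftrightarrow> u = c \<or> u \<in> Y" "\<And>u. E c u \<longleftrightarrow> u = a \<or> u = b"
    "\<And>u. E u v \<longleftrightarrow> u \<in> X \<union> Y" "\<And>u. E u a \<longleftrightarrow> u = c \<or> u \<in> X"
    "\<And>u. E u b \<longleftrightarrow> u = c \<or> u \<in> Y" "\<And>u. E u c \<longleftrightarrow> u = a \<or> u = b"
proof -
  obtain A1 A2 A3 A4 A5 A6 A7 A8 A9 A10 A11 A12 where A: "simple_graph V E" "V = {v,a,b,c} \<union> X \<union> Y" "distinct [v,a,b,c]"
   "X \<inter> Y = {}" "v \<notin> X \<union> Y" "a \<notin> X \<union> Y" "b \<notin> X \<union> Y" "c \<notin> X \<union> Y"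
   "\<forall>u. E v u \<longleftrightarrow> u \<in> X \<union> Y" "\<forall>u. E a u \<longleftrightarrow> u = c \<or> u \<in> X"
   "\<forall>u. E b u \<longleftrightarrow> u = c \<or> u \<in> Y" "\<forall>u. E c u \<longleftrightarrow> u = a \<or> u = b"
    using st unfolding struct_def by (elim conjE) (rule that; assumption)
  have sy: "\<And>x y. E x y \<longleftrightarrow> E y x" using struct_sym[OF st] by blast
  show "finite V" using A(1) unfolding simple_graph_def by blast
  show "V = {v,a,b,c} \<union> X \<union> Y" by (fact A(2))
  show "v \<noteq> a" "v \<noteq> b" "v \<noteq> c" "a \<noteq> b" "a \<noteq> c" "b \<noteq> c" using A(3) by simp_all
  show "X \<inter> Y = {}" by (fact A(4))
  show "v \<notin> X" "v \<notin> Y" "a \<notin> X" "a \<notin> Y" "b \<notin> X" "b \<notin> Y" "c \<notin> X" "c \<notin> Y"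
    using A(5-8) by simp_all
  show "\<And>u. E v u \<longleftrightarrow> u \<in> X \<union> Y" "\<And>u. E a u \<longleftrightarrow> u = c \<or> u \<in> X"
    "\<And>u. E b u \<longleftrightarrow> u = c \<or> u \<in> Y" "\<And>u. E c u \<longleftrightarrow> u = a \<or> u = b" using A(9-12) by blast+
  show "\<And>u. E u v \<longleftrightarrow> u \<in> X \<union> Y" "\<And>u. E u a \<longleftrightarrow> u = c \<or> u \<in> X"
    "\<And>u. E u b \<longleftrightarrow> u = c \<or> u \<in> Y" "\<And>u. E u c \<longleftrightarrow> u = a \<or> u = b"
    using A(9-12) sy by blast+
qed

lemma in3: "finite S \<Longrightarrow> card S \<le> 3 \<Longrightarrow> {x,y,z} \<subseteq> S \<Longrightarrow> distinct [x,y,z] \<Longrightarrow> u \<in> S \<Longrightarrow> u = x \<or> u = y \<or> u = z"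
proof -
  assume a: "finite S" "card S \<le> 3" "{x,y,z} \<subseteq> S" "distinct [x,y,z]" "u \<in> S"
  have "card {x,y,z} = 3" using a(4) by simp
  hence "{x,y,z} = S" using card_subset_eq[OF a(1) a(3)] a(2) card_mono[OF a(1) a(3)] by simp
  thus ?thesis using a(5) by auto
qed

lemma halfD1: "half X Y E \<Longrightarrow> p \<in> X \<Longrightarrow> \<exists>t\<in>Y. \<not> E p t"
  unfolding half_def by blast
lemma halfD2: "half X Y E \<Longrightarrow> p \<in> X \<Longrightarrow> t \<in> Y \<Longrightarrow> E p t \<Longrightarrow> \<exists>y\<in>Y. \<not> E y p \<and> \<not> E y t"
  unfolding half_def by blast
lemma halfD3: "half X Y E \<Longrightarrow> s \<in> X \<Longrightarrow> \<exists>t\<in>Y. \<not> E s t \<and> ((\<forall>x\<in>X. x \<noteq> s \<longrightarrow> E x t) \<or>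
       (\<exists>q\<in>X. q \<noteq> s \<and> \<not> E s q \<and> E q t \<and> (\<forall>x\<in>X. x \<noteq> s \<longrightarrow> E x t \<or> E x q)))"
  unfolding half_def by blast

lemma noTDS_a:
  assumes st: "struct V E v a b c X Y" and h: "half X Y E"
    and S: "S \<subseteq> V" "card S \<le> 3" and dom: "\<forall>w\<in>V. \<exists>u\<in>S. E w u" and aS: "a \<in> S"
  shows False
proof -
  note sd = structD[OF st] and ss = structS[OF st]
  have fS: "finite S" using S(1) sd(1) finite_subset by blast
  have vV: "v \<in> V" "a \<in> V" "b \<in> V" "c \<in> V" using sd(2) by auto
  obtain p where p: "p \<in> S" "E v p" using dom vV by blast
  have pN: "p \<in> X \<union> Y" using p(2) sd(18) by blast
  obtain u where u: "u \<in> S" "E a u" using dom vV by blast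
  show False
  proof (cases "c \<in> S")
    case True
    have "p \<noteq> a" "p \<noteq> c" using pN sd(12,13,16,17) by auto
    hence d: "distinct [a,c,p]" using sd(7) by auto
    have sub: "{a,c,p} \<subseteq> S" using aS True p by auto
    have inS: "\<And>w. w \<in> S \<Longrightarrow> w = a \<or> w = c \<or> w = p" using in3[OF fS S(2) sub d] by blast
    have pV: "p \<in> V" using pN sd(2) by auto
    obtain w where w: "w \<in> S" "E p w" using dom pV by blast
    have "p \<notin> Y"
    proof
      assume pY: "p \<in> Y"
      have "w = a \<or> w = c \<or> w = p" using inS w(1) by blast
      moreover have "\<not> E p a" using pY sd(9,23,17) by auto
      moreover have "\<not> E p c" using pY sd(25,13,15) by auto
      moreover have "\<not> E p p" using ss(2) by blast
      ultimately show False using w(2) by blast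
    qed
    hence pX: "p \<in> X" using pN by blast
    obtain t where t: "t \<in> Y" "\<not> E p t" using halfD1[OF h pX] by blast
    have tV: "t \<in> V" using t sd(2) by auto
    obtain w' where w': "w' \<in> S" "E t w'" using dom tV by blast
    have "w' = a \<or> w' = c \<or> w' = p" using inS w'(1) by blast
    moreover have "\<not> E t a" using t(1) sd(9,23) sd(17) by auto
    moreover have "\<not> E t c" using t(1) sd(25,13,15) by auto
    moreover have "\<not> E t p" using t(2) ss(1) by blast
    ultimately show False using w'(2) by blast
  next
    case False
    have uX: "u \<in> X" using u(2) sd(19) False u(1) by auto
    obtain t where t: "t \<in> S" "E b t" using dom vV by blast
    have tY: "t \<in> Y" using t sd(20) False by auto
    have "a \<noteq> u" "a \<noteq> t" "u \<noteq> t" using uX tY sd(9,12,13) by auto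
    hence d: "distinct [a,u,t]" by auto
    have sub: "{a,u,t} \<subseteq> S" using aS u t by auto
    have inS: "\<And>w. w \<in> S \<Longrightarrow> w = a \<or> w = u \<or> w = t" using in3[OF fS S(2) sub d] by blast
    have tV: "t \<in> V" using tY sd(2) by auto
    obtain w where w: "w \<in> S" "E t w" using dom tV by blast
    have "w = a \<or> w = u \<or> w = t" using inS w(1) by blast
    moreover have "\<not> E t a" using tY sd(9,23,17) by auto
    moreover have "\<not> E t t" using ss(2) by blast
    ultimately have "E t u" using w(2) by blast
    hence "E u t" using ss(1) by blast
    then obtain y where y: "y \<in> Y" "\<not> E y u" "\<not> E y t" using halfD2[OF h uX tY] by blast
    have yV: "y \<in> V" using y sd(2) by auto
    obtain w' where w': "w' \<in> S" "E y w'" using dom yV by blast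
    have "w' = a \<or> w' = u \<or> w' = t" using inS w'(1) by blast
    moreover have "\<not> E y a" using y(1) sd(9,23,17) by auto
    ultimately show False using w'(2) y by blast
  qed
qed

lemma noTDS:
  assumes st: "struct V E v a b c X Y" and h: "half X Y E" "half Y X E"
    and T: "total_dominating V E S"
  shows "4 \<le> card S"
proof (rule ccontr)
  assume "\<not> 4 \<le> card S"
  hence c3: "card S \<le> 3" by simp
  note sd = structD[OF st]
  have S: "S \<subseteq> V" "\<forall>w\<in>V. \<exists>u\<in>S. E w u" using T unfolding total_dominating_def by auto
  have "c \<in> V" using sd(2) by auto
  then obtain u where "u \<in> S" "E c u" using S by blast
  hence "a \<in> S \<or> b \<in> S" using sd by auto
  thus False
  proof
    assume "a \<in> S" thus False using noTDS_a[OF st h(1) S(1) c3 S(2)] by blast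
  next
    assume "b \<in> S" thus False using noTDS_a[OF struct_swap[OF st] h(2) S(1) c3 S(2)] by blast
  qed
qed

lemma gamma4:
  assumes st: "struct V E v a b c X Y" and h: "half X Y E" "half Y X E"
    and ne: "X \<noteq> {}" "Y \<noteq> {}"
  shows "gamma_t V E = 4"
proof -
  note sd = structD[OF st]
  obtain x y where xy: "x \<in> X" "y \<in> Y" using ne by blast
  have T: "total_dominating V E {a,x,b,y}"
    unfolding total_dominating_def
  proof
    show "{a,x,b,y} \<subseteq> V" using xy sd(2) by auto
    show "\<forall>w\<in>V. \<exists>u\<in>{a,x,b,y}. E w u"
    proof
      fix w assume "w \<in> V"
      hence "w = v \<or> w = a \<or> w = b \<or> w = c \<or> w \<in> X \<or> w \<in> Y" using sd(2) by auto
      thus "\<exists>u\<in>{a,x,b,y}. E w u" using xy sd by auto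
    qed
  qed
  have "x \<noteq> y" "a \<noteq> x" "a \<noteq> y" "b \<noteq> x" "b \<noteq> y" using xy sd(9,12,13,14,15) by blast+
  hence "card {a,x,b,y} = 4" using sd(6) by (simp add: card_insert_if)
  thus ?thesis using gamma_t_eqI[OF T] noTDS[OF st h] by blast
qed

lemma crit_X:
  assumes st: "struct V E v a b c X Y" and h: "half X Y E" and s: "s \<in> X"
  shows "gamma_t (V - {s}) (del_vertex_edges E s) < 4"
proof -
  note sd = structD[OF st]
  obtain t where t: "t \<in> Y" "\<not> E s t" and
    alt: "(\<forall>x\<in>X. x \<noteq> s \<longrightarrow> E x t) \<or>
       (\<exists>q\<in>X. q \<noteq> s \<and> \<not> E s q \<and> E q t \<and> (\<forall>x\<in>X. x \<noteq> s \<longrightarrow> E x t \<or> E x q))"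
    using halfD3[OF h s] by blast
  have ts: "t \<noteq> s" using t s sd by auto
  from alt show ?thesis
  proof
    assume A: "\<forall>x\<in>X. x \<noteq> s \<longrightarrow> E x t"
    have T: "total_dominating (V - {s}) (del_vertex_edges E s) {b,c,t}"
      unfolding total_dominating_def del_vertex_edges_def
    proof
      show "{b,c,t} \<subseteq> V - {s}" using t s sd by auto
      show "\<forall>w\<in>V - {s}. \<exists>u\<in>{b,c,t}. E w u \<and> w \<noteq> s \<and> u \<noteq> s"
      proof
        fix w assume w: "w \<in> V - {s}"
        hence "w = v \<or> w = a \<or> w = b \<or> w = c \<or> (w \<in> X \<and> w \<noteq> s) \<or> w \<in> Y" using sd(2) by auto
        thus "\<exists>u\<in>{b,c,t}. E w u \<and> w \<noteq> s \<and> u \<noteq> s" using t s sd A ts w by auto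
      qed
    qed
    show ?thesis using gamma_t_le[OF T] card3[of b c t] by linarith
  next
    assume "\<exists>q\<in>X. q \<noteq> s \<and> \<not> E s q \<and> E q t \<and> (\<forall>x\<in>X. x \<noteq> s \<longrightarrow> E x t \<or> E x q)"
    then obtain q where q: "q \<in> X" "q \<noteq> s" "E q t" "\<forall>x\<in>X. x \<noteq> s \<longrightarrow> E x t \<or> E x q" by blast
    have T: "total_dominating (V - {s}) (del_vertex_edges E s) {b,t,q}"
      unfolding total_dominating_def del_vertex_edges_def
    proof
      show "{b,t,q} \<subseteq> V - {s}" using t q s sd by auto
      show "\<forall>w\<in>V - {s}. \<exists>u\<in>{b,t,q}. E w u \<and> w \<noteq> s \<and> u \<noteq> s"
      proof
        fix w assume w: "w \<in> V - {s}"
        have "w = v \<or> w = a \<or> w = b \<or> w = c \<or> (w \<in> X \<and> w \<noteq> s) \<or> w \<in> Y" using sd(2) w by auto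
        moreover have "q \<noteq> s" "t \<noteq> s" "b \<noteq> s" using q ts s sd by auto
        ultimately show "\<exists>u\<in>{b,t,q}. E w u \<and> w \<noteq> s \<and> u \<noteq> s"
        proof (elim disjE)
          assume "w = v" thus ?thesis using t(1) sd(18) \<open>t \<noteq> s\<close> w by auto
        next
          assume "w = a" thus ?thesis using q(1) sd(19) \<open>q \<noteq> s\<close> w by auto
        next
          assume "w = b" thus ?thesis using t(1) sd(20) \<open>t \<noteq> s\<close> w by auto
        next
          assume "w = c" thus ?thesis using sd(21) \<open>b \<noteq> s\<close> w by auto
        next
          assume "w \<in> X \<and> w \<noteq> s" thus ?thesis using q(4) \<open>t \<noteq> s\<close> \<open>q \<noteq> s\<close> w by blast
        next
          assume "w \<in> Y" thus ?thesis using sd(24) \<open>b \<noteq> s\<close> w by auto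
        qed
      qed
    qed
    show ?thesis using gamma_t_le[OF T] card3[of b t q] by linarith
  qed
qed

lemma crit_all:
  assumes st: "struct V E v a b c X Y" and h: "half X Y E" "half Y X E"
    and ne: "X \<noteq> {}" "Y \<noteq> {}" and w: "w \<in> V"
  shows "gamma_t (V - {w}) (del_vertex_edges E w) < 4"
proof -
  note sd = structD[OF st]
  obtain x y where xy: "x \<in> X" "y \<in> Y" using ne by blast
  have cases: "w = v \<or> w = a \<or> w = b \<or> w = c \<or> w \<in> X \<or> w \<in> Y" using w sd(2) by auto
  have gen: "\<And>S. total_dominating (V - {w}) (del_vertex_edges E w) S \<Longrightarrow> card S \<le> 3 \<Longrightarrow> ?thesis"
    using gamma_t_le by fastforce
  show ?thesis
  proof -
    { assume "w = v"
      have "total_dominating (V - {w}) (del_vertex_edges E w) {a,c,b}"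
        unfolding total_dominating_def del_vertex_edges_def
      proof
        show "{a,c,b} \<subseteq> V - {w}" using \<open>w = v\<close> sd by auto
        show "\<forall>z\<in>V - {w}. \<exists>u\<in>{a,c,b}. E z u \<and> z \<noteq> w \<and> u \<noteq> w"
        proof
          fix z assume z: "z \<in> V - {w}"
          hence "z = a \<or> z = b \<or> z = c \<or> z \<in> X \<or> z \<in> Y" using sd(2) \<open>w = v\<close> by auto
          thus "\<exists>u\<in>{a,c,b}. E z u \<and> z \<noteq> w \<and> u \<noteq> w" using \<open>w = v\<close> sd z by auto
        qed
      qed
      hence ?thesis using gen card3 by blast }
    moreover
    { assume "w = a"
      have "total_dominating (V - {w}) (del_vertex_edges E w) {b,y,v}"
        unfolding total_dominating_def del_vertex_edges_def
      proof
        show "{b,y,v} \<subseteq> V - {w}" using \<open>w = a\<close> sd xy by auto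
        show "\<forall>z\<in>V - {w}. \<exists>u\<in>{b,y,v}. E z u \<and> z \<noteq> w \<and> u \<noteq> w"
        proof
          fix z assume z: "z \<in> V - {w}"
          hence "z = v \<or> z = b \<or> z = c \<or> z \<in> X \<or> z \<in> Y" using sd(2) \<open>w = a\<close> by auto
          thus "\<exists>u\<in>{b,y,v}. E z u \<and> z \<noteq> w \<and> u \<noteq> w" using \<open>w = a\<close> sd z xy by auto
        qed
      qed
      hence ?thesis using gen card3 by blast }
    moreover
    { assume "w = b"
      have "total_dominating (V - {w}) (del_vertex_edges E w) {a,x,v}"
        unfolding total_dominating_def del_vertex_edges_def
      proof
        show "{a,x,v} \<subseteq> V - {w}" using \<open>w = b\<close> sd xy by auto
        show "\<forall>z\<in>V - {w}. \<exists>u\<in>{a,x,v}. E z u \<and> z \<noteq> w \<and> u \<noteq> w"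
        proof
          fix z assume z: "z \<in> V - {w}"
          hence "z = v \<or> z = a \<or> z = c \<or> z \<in> X \<or> z \<in> Y" using sd(2) \<open>w = b\<close> by auto
          thus "\<exists>u\<in>{a,x,v}. E z u \<and> z \<noteq> w \<and> u \<noteq> w" using \<open>w = b\<close> sd z xy by auto
        qed
      qed
      hence ?thesis using gen card3 by blast }
    moreover
    { assume "w = c"
      have "total_dominating (V - {w}) (del_vertex_edges E w) {v,x,y}"
        unfolding total_dominating_def del_vertex_edges_def
      proof
        show "{v,x,y} \<subseteq> V - {w}" using \<open>w = c\<close> sd xy by auto
        show "\<forall>z\<in>V - {w}. \<exists>u\<in>{v,x,y}. E z u \<and> z \<noteq> w \<and> u \<noteq> w"
        proof
          fix z assume z: "z \<in> V - {w}"
          hence "z = v \<or> z = a \<or> z = b \<or> z \<in> X \<or> z \<in> Y" using sd(2) \<open>w = c\<close> by auto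
          thus "\<exists>u\<in>{v,x,y}. E z u \<and> z \<noteq> w \<and> u \<noteq> w" using \<open>w = c\<close> sd z xy by auto
        qed
      qed
      hence ?thesis using gen card3 by blast }
    moreover
    { assume "w \<in> X" hence ?thesis using crit_X[OF st h(1)] by blast }
    moreover
    { assume "w \<in> Y" hence ?thesis using crit_X[OF struct_swap[OF st] h(2)] by blast }
    ultimately show ?thesis using cases by blast
  qed
qed

lemma hdeg:
  assumes fN: "finite N" and u: "u \<in> N" and w: "w \<in> N" "w \<noteq> u" "\<not> E u w" and irr: "\<not> E u u"
  shows "card {x \<in> N. E u x} + 2 \<le> card N"
proof -
  have sub: "{x \<in> N. E u x} \<subseteq> N - {u,w}" using w irr by auto
  have "card (N - {u,w}) = card N - 2" using u w fN by (simp add: card_Diff_subset)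
  moreover have "card {x \<in> N. E u x} \<le> card (N - {u,w})" using sub fN by (intro card_mono) auto
  moreover have "2 \<le> card N"
  proof -
    have "card {u,w} = 2" using w by simp
    moreover have "card {u,w} \<le> card N" using u w fN by (intro card_mono) auto
    ultimately show ?thesis by simp
  qed
  ultimately show ?thesis by linarith
qed

lemma degX:
  assumes st: "struct V E v a b c X Y" and hb: "\<forall>u\<in>X\<union>Y. \<exists>w\<in>X\<union>Y. w \<noteq> u \<and> \<not> E u w"
    and u: "u \<in> X"
  shows "2 \<le> degree V E u \<and> degree V E u \<le> card (X \<union> Y)"
proof -
  note sd = structD[OF st] and ss = structS[OF st]
  have fV: "finite V" by (fact sd(1))
  have fN: "finite (X \<union> Y)" using fV sd(2) finite_subset by auto
  have sub: "{w \<in> V. E u w} \<subseteq> insert v (insert a {w \<in> X \<union> Y. E u w})"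
  proof
    fix w assume w: "w \<in> {w \<in> V. E u w}"
    hence "w = v \<or> w = a \<or> w = b \<or> w = c \<or> w \<in> X \<or> w \<in> Y" using sd(2) by auto
    moreover have "\<not> E u b" using u sd(9,24,16) by auto
    moreover have "\<not> E u c" using u sd(25,12,14) by auto
    ultimately show "w \<in> insert v (insert a {w \<in> X \<union> Y. E u w})" using w by auto
  qed
  have sup: "{v,a} \<subseteq> {w \<in> V. E u w}" using u sd(2,22,23) by auto
  have "card {v,a} = 2" using sd(3) by simp
  hence lo: "2 \<le> degree V E u" unfolding degree_def using card_mono[OF _ sup] fV by auto
  obtain w where w: "w \<in> X \<union> Y" "w \<noteq> u" "\<not> E u w" using hb u by blast
  have "card {x \<in> X \<union> Y. E u x} + 2 \<le> card (X \<union> Y)"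
    using hdeg[of "X \<union> Y" u w E] fN w ss(2)[of u] u by blast
  moreover have "card {w \<in> V. E u w} \<le> card (insert v (insert a {w \<in> X \<union> Y. E u w}))"
    using sub fN by (intro card_mono) auto
  moreover have "card (insert v (insert a {w \<in> X \<union> Y. E u w})) \<le> card {w \<in> X \<union> Y. E u w} + 2"
    using fN by (simp add: card_insert_if)
  ultimately show ?thesis using lo unfolding degree_def by linarith
qed

lemma suff:
  assumes st: "struct V E v a b c X Y" and h: "half X Y E" "half Y X E"
    and ne: "X \<noteq> {}" "Y \<noteq> {}" and hb: "\<forall>u\<in>X\<union>Y. \<exists>w\<in>X\<union>Y. w \<noteq> u \<and> \<not> E u w"
  shows "simple_graph V E \<and> m_gamma_t_critical 4 V E \<and> card V = max_degree V E + 4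
      \<and> max_degree V E = card (X \<union> Y) \<and> min_degree V E \<ge> 2"
proof -
  note sd = structD[OF st] and ss = structS[OF st]
  have sg: "simple_graph V E" by (fact struct_sg[OF st])
  have fV: "finite V" by (fact sd(1))
  have fX: "finite X" "finite Y" using fV sd(2) finite_subset by auto
  have fN: "finite (X \<union> Y)" using fX by auto
  define n where "n = card (X \<union> Y)"
  have cXY: "n = card X + card Y" unfolding n_def using fX sd(9) card_Un_disjoint by blast
  have cX: "1 \<le> card X" "1 \<le> card Y" using ne fX by (auto simp: Suc_le_eq card_gt_0_iff)
  have g4: "gamma_t V E = 4" by (rule gamma4[OF st h ne])
  have degs: "\<And>u. u \<in> V \<Longrightarrow> 2 \<le> degree V E u \<and> degree V E u \<le> n"
  proof -
    fix u assume uV: "u \<in> V"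
    hence "u = v \<or> u = a \<or> u = b \<or> u = c \<or> u \<in> X \<or> u \<in> Y" using sd(2) by auto
    thus "2 \<le> degree V E u \<and> degree V E u \<le> n"
    proof (elim disjE)
      assume "u = v"
      have "{w \<in> V. E v w} = X \<union> Y" using sd(2,18) by auto
      thus ?thesis using \<open>u = v\<close> cXY cX unfolding degree_def n_def by simp
    next
      assume "u = a"
      have "{w \<in> V. E a w} = insert c X" using sd(2,19) by auto
      moreover have "card (insert c X) = card X + 1" using fX sd(16) by simp
      ultimately show ?thesis using \<open>u = a\<close> cXY cX unfolding degree_def by simp
    next
      assume "u = b"
      have "{w \<in> V. E b w} = insert c Y" using sd(2,20) by auto
      moreover have "card (insert c Y) = card Y + 1" using fX sd(17) by simp
      ultimately show ?thesis using \<open>u = b\<close> cXY cX unfolding degree_def by simp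
    next
      assume "u = c"
      have "{w \<in> V. E c w} = {a,b}" using sd(2,21) by auto
      moreover have "card {a,b} = 2" using sd(6) by simp
      ultimately show ?thesis using \<open>u = c\<close> cXY cX unfolding degree_def by simp
    next
      assume "u \<in> X" thus ?thesis using degX[OF st hb] n_def by blast
    next
      assume "u \<in> Y"
      have hb': "\<forall>u\<in>Y\<union>X. \<exists>w\<in>Y\<union>X. w \<noteq> u \<and> \<not> E u w" using hb by (simp add: Un_commute)
      show ?thesis using degX[OF struct_swap[OF st] hb' \<open>u \<in> Y\<close>] n_def by (simp add: Un_commute)
    qed
  qed
  have vV: "v \<in> V" using sd(2) by auto
  have dv: "degree V E v = n"
  proof -
    have "{w \<in> V. E v w} = X \<union> Y" using sd(2,18) by auto
    thus ?thesis unfolding degree_def n_def by simp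
  qed
  have maxd: "max_degree V E = n"
    unfolding max_degree_def
  proof (rule Max_eqI)
    show "finite (degree V E ` V)" using fV by simp
    show "\<And>y. y \<in> degree V E ` V \<Longrightarrow> y \<le> n" using degs by auto
    show "n \<in> degree V E ` V" using dv vV by force
  qed
  have mind: "2 \<le> min_degree V E"
    unfolding min_degree_def using degs fV vV by (subst Min_ge_iff) auto
  have cV: "card V = n + 4"
  proof -
    have "V = {v,a,b,c} \<union> (X \<union> Y)" using sd(2) by auto
    moreover have "{v,a,b,c} \<inter> (X \<union> Y) = {}" using sd(10-17) by auto
    moreover have "card {v,a,b,c} = 4" using sd(3-8) by simp
    ultimately show ?thesis unfolding n_def using fN card_Un_disjoint[of "{v,a,b,c}" "X \<union> Y"] by simp
  qed
  have noiso: "no_isolated V E"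
    unfolding no_isolated_def
  proof
    fix u assume uV: "u \<in> V"
    have c2: "2 \<le> card {w \<in> V. E u w}" using degs[OF uV] unfolding degree_def by simp
    show "\<exists>w\<in>V. E u w"
    proof (rule ccontr)
      assume "\<not> (\<exists>w\<in>V. E u w)"
      hence e: "{w \<in> V. E u w} = {}" by blast
      show False using c2 unfolding e by simp
    qed
  qed
  have crit: "gamma_t_critical V E"
    unfolding gamma_t_critical_def using noiso crit_all[OF st h ne] g4 by simp
  show ?thesis using sg crit g4 maxd mind cV unfolding m_gamma_t_critical_def n_def by simp
qed

definition famX :: "nat \<Rightarrow> nat set" where "famX k = (\<lambda>i. 4+3*i) ` {..<k}"
definition famY :: "nat \<Rightarrow> bool \<Rightarrow> nat set" where
  "famY k d = (\<lambda>i. 5+3*i) ` {..<k} \<union> (if d then (\<lambda>i. 6+3*i) ` {..<3} else {})"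
definition famV :: "nat \<Rightarrow> bool \<Rightarrow> nat set" where "famV k d = {0,1,2,3} \<union> famX k \<union> famY k d"
definition famH :: "nat \<Rightarrow> bool \<Rightarrow> nat \<Rightarrow> nat \<Rightarrow> bool" where
  "famH k d x y \<longleftrightarrow> (\<exists>i<k. \<exists>j<k. i \<noteq> j \<and> x = 4+3*j \<and> y = 5+3*i)
     \<or> (d \<and> (\<exists>j<k. \<exists>i<3. i \<noteq> j \<and> x = 4+3*j \<and> y = 6+3*i))
     \<or> (d \<and> (\<exists>i<3. x = 5+3*i \<and> y = 6+3*((i+1) mod 3)))"
definition famB :: "nat \<Rightarrow> bool \<Rightarrow> nat \<Rightarrow> nat \<Rightarrow> bool" where
  "famB k d x y \<longleftrightarrow> (x = 0 \<and> y \<in> famX k \<union> famY k d) \<or> (x = 1 \<and> (y = 3 \<or> y \<in> famX k))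
     \<or> (x = 2 \<and> (y = 3 \<or> y \<in> famY k d))"
definition famE :: "nat \<Rightarrow> bool \<Rightarrow> nat \<Rightarrow> nat \<Rightarrow> bool" where
  "famE k d x y \<longleftrightarrow> famB k d x y \<or> famB k d y x \<or> famH k d x y \<or> famH k d y x"

lemma ar[simp]:
  "4 + 3*j \<noteq> 5 + 3*(i::nat)" "5 + 3*i \<noteq> 4 + 3*(j::nat)"
  "4 + 3*j \<noteq> 6 + 3*(i::nat)" "6 + 3*i \<noteq> 4 + 3*(j::nat)"
  "5 + 3*j \<noteq> 6 + 3*(i::nat)" "6 + 3*i \<noteq> 5 + 3*(j::nat)"
  by presburger+

lemma memX: "u \<in> famX k \<longleftrightarrow> (\<exists>j<k. u = 4+3*j)"
  unfolding famX_def by auto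
lemma memY: "u \<in> famY k d \<longleftrightarrow> (\<exists>i<k. u = 5+3*i) \<or> (d \<and> (\<exists>i<3. u = 6+3*i))"
  unfolding famY_def by auto

lemma famE_sym: "famE k d x y \<longleftrightarrow> famE k d y x"
  unfolding famE_def by blast

lemma E_XX: "\<not> famE k d (4+3*j) (4+3*j')"
  unfolding famE_def famB_def famH_def memX memY by auto
lemma E_YY: "\<not> famE k d (5+3*j) (5+3*j')"
  unfolding famE_def famB_def famH_def memX memY by auto
lemma E_PP: "\<not> famE k d (6+3*j) (6+3*j')"
  unfolding famE_def famB_def famH_def memX memY by auto
lemma E_XY: "j < k \<Longrightarrow> i < k \<Longrightarrow> famE k d (4+3*j) (5+3*i) \<longleftrightarrow> i \<noteq> j"
  unfolding famE_def famB_def famH_def memX memY by auto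
lemma E_XP: "j < k \<Longrightarrow> famE k d (4+3*j) (6+3*i) \<longleftrightarrow> d \<and> i < 3 \<and> i \<noteq> j"
  unfolding famE_def famB_def famH_def memX memY by auto
lemma E_YP: "famE k d (5+3*i) (6+3*i') \<longleftrightarrow> d \<and> i < 3 \<and> i' = (i+1) mod 3"
  unfolding famE_def famB_def famH_def memX memY by auto

lemma fam_struct:
  assumes dk: "d \<longrightarrow> 3 \<le> k"
  shows "struct (famV k d) (famE k d) 0 1 2 3 (famX k) (famY k d)"
proof -
  have fin: "finite (famV k d)" unfolding famV_def famX_def famY_def by auto
  have inV: "\<And>x y. famE k d x y \<Longrightarrow> x \<in> famV k d \<and> y \<in> famV k d"
    unfolding famE_def famB_def famH_def famV_def using dk by (auto simp: memX memY)
  have irr: "\<And>x. \<not> famE k d x x"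
    unfolding famE_def famB_def famH_def by (auto simp: memX memY)
  have sg: "simple_graph (famV k d) (famE k d)"
    unfolding simple_graph_def using fin inV irr famE_sym by blast
  have disj: "famX k \<inter> famY k d = {}" by (auto simp: memX memY)
  have nin: "0 \<notin> famX k \<union> famY k d" "1 \<notin> famX k \<union> famY k d" "2 \<notin> famX k \<union> famY k d"
    "3 \<notin> famX k \<union> famY k d" by (auto simp: memX memY)
  have e0: "\<forall>u. famE k d 0 u \<longleftrightarrow> u \<in> famX k \<union> famY k d"
    unfolding famE_def famB_def famH_def using nin by (auto simp: memX memY)
  have e1: "\<forall>u. famE k d 1 u \<longleftrightarrow> u = 3 \<or> u \<in> famX k"
    unfolding famE_def famB_def famH_def using nin by (auto simp: memX memY)
  have e2: "\<forall>u. famE k d 2 u \<longleftrightarrow> u = 3 \<or> u \<in> famY k d"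
    unfolding famE_def famB_def famH_def using nin by (auto simp: memX memY)
  have e3: "\<forall>u. famE k d 3 u \<longleftrightarrow> u = 1 \<or> u = 2"
    unfolding famE_def famB_def famH_def using nin by (auto simp: memX memY)
  show ?thesis unfolding struct_def using sg disj nin e0 e1 e2 e3 by (simp add: famV_def)
qed


lemma fam_half1: "half (famX k) (famY k d) (famE k d)"
  unfolding half_def
proof (intro conjI ballI impI)
  fix p assume "p \<in> famX k"
  then obtain j where j: "j < k" "p = 4+3*j" by (auto simp: memX)
  show "\<exists>t\<in>famY k d. \<not> famE k d p t"
    using j E_XY[of j k j d] by (intro bexI[of _ "5+3*j"]) (auto simp: memY)
next
  fix p t assume p: "p \<in> famX k" and t: "t \<in> famY k d" and e: "famE k d p t"
  then obtain j where j: "j < k" "p = 4+3*j" by (auto simp: memX)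
  from t consider (U) i where "i < k" "t = 5+3*i" | (P) i where "d" "i < 3" "t = 6+3*i"
    by (auto simp: memY)
  thus "\<exists>y\<in>famY k d. \<not> famE k d y p \<and> \<not> famE k d y t"
  proof cases
    case U
    show ?thesis
      using j U E_XY[of j k j d] E_YY[of k d j i] famE_sym
      by (intro bexI[of _ "5+3*j"]) (auto simp: memY)
  next
    case P
    show ?thesis
    proof (cases "j < 3")
      case True
      show ?thesis using j P True E_XP[of j k d j] E_PP[of k d j i] famE_sym
        by (intro bexI[of _ "6+3*j"]) (auto simp: memY)
    next
      case False
      show ?thesis using j P False E_XY[of j k j d] E_YP[of k d j i] famE_sym
        by (intro bexI[of _ "5+3*j"]) (auto simp: memY)
    qed
  qed
next
  fix s assume "s \<in> famX k"
  then obtain j where j: "j < k" "s = 4+3*j" by (auto simp: memX)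
  show "\<exists>t\<in>famY k d. \<not> famE k d s t \<and> ((\<forall>x\<in>famX k. x \<noteq> s \<longrightarrow> famE k d x t) \<or>
       (\<exists>q\<in>famX k. q \<noteq> s \<and> \<not> famE k d s q \<and> famE k d q t \<and> (\<forall>x\<in>famX k. x \<noteq> s \<longrightarrow> famE k d x t \<or> famE k d x q)))"
  proof (intro bexI[of _ "5+3*j"] conjI disjI1 ballI impI)
    show "5 + 3*j \<in> famY k d" using j by (auto simp: memY)
    show "\<not> famE k d s (5 + 3 * j)" using j E_XY[of j k j d] by simp
    fix x assume "x \<in> famX k" "x \<noteq> s"
    then obtain j' where "j' < k" "x = 4+3*j'" "j' \<noteq> j" using j by (auto simp: memX)
    thus "famE k d x (5 + 3 * j)" using j E_XY[of j' k j d] by simp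
  qed
qed


lemma mod3f: "(i::nat) < 3 \<Longrightarrow> (i+2) mod 3 \<noteq> i \<and> i = ((i+2) mod 3 + 1) mod 3 \<and> (i+2) mod 3 < 3 \<and> (i+1) mod 3 \<noteq> i \<and> (i+1) mod 3 < 3"
proof -
  assume "i < 3"
  hence "i = 0 \<or> i = 1 \<or> i = 2" by auto
  thus ?thesis by (elim disjE) simp_all
qed

lemma famY_cases:
  assumes dk: "d \<longrightarrow> 3 \<le> k" and p: "p \<in> famY k d"
  obtains (U) i where "i < k" "p = 5+3*i" | (P) i where "d" "i < 3" "i < k" "p = 6+3*i"
  using p dk by (auto simp: memY)

lemma famY_block:
  assumes dk: "d \<longrightarrow> 3 \<le> k" and p: "p \<in> famY k d"
  shows "\<exists>i<k. \<not> famE k d (4+3*i) p"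
proof -
  consider (U) i where "i < k" "p = 5+3*i" | (P) i where "d" "i < 3" "i < k" "p = 6+3*i"
    using p dk by (auto simp: memY)
  then show ?thesis
proof cases
  case (U i) thus ?thesis using E_XY[of i k i d] by auto
next
  case (P i) thus ?thesis using E_XP[of i k d i] by auto
qed
qed

lemma fam_half2:
  assumes dk: "d \<longrightarrow> 3 \<le> k"
  shows "half (famY k d) (famX k) (famE k d)"
  unfolding half_def
proof (intro conjI ballI impI)
  fix p assume "p \<in> famY k d"
  then obtain i where "i < k" "\<not> famE k d (4+3*i) p" using famY_block[OF dk] by blast
  thus "\<exists>t\<in>famX k. \<not> famE k d p t" using famE_sym by (intro bexI[of _ "4+3*i"]) (auto simp: memX)
next
  fix p t assume p: "p \<in> famY k d" and t: "t \<in> famX k" and e: "famE k d p t"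
  then obtain i where i: "i < k" "\<not> famE k d (4+3*i) p" using famY_block[OF dk] by blast
  obtain j where "t = 4+3*j" using t by (auto simp: memX)
  thus "\<exists>y\<in>famX k. \<not> famE k d y p \<and> \<not> famE k d y t" using i E_XX
    by (intro bexI[of _ "4+3*i"]) (auto simp: memX)
next
  fix s assume s: "s \<in> famY k d"
  show "\<exists>t\<in>famX k. \<not> famE k d s t \<and> ((\<forall>x\<in>famY k d. x \<noteq> s \<longrightarrow> famE k d x t) \<or>
       (\<exists>q\<in>famY k d. q \<noteq> s \<and> \<not> famE k d s q \<and> famE k d q t \<and> (\<forall>x\<in>famY k d. x \<noteq> s \<longrightarrow> famE k d x t \<or> famE k d x q)))"
  proof -
  consider (SU) i where "i < k" "s = 5+3*i" | (SP) i where "d" "i < 3" "i < k" "s = 6+3*i"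
    using s dk by (auto simp: memY)
  then show ?thesis
  proof cases
    case (SU i)
    have tX: "4+3*i \<in> famX k" using SU by (auto simp: memX)
    have ne: "\<not> famE k d s (4+3*i)" using SU E_XY[of i k i d] famE_sym by auto
    show ?thesis
    proof (cases "d \<and> i < 3")
      case False
      have "\<forall>x\<in>famY k d. x \<noteq> s \<longrightarrow> famE k d x (4+3*i)"
      proof (intro ballI impI)
        fix x assume x: "x \<in> famY k d" "x \<noteq> s"
        consider (XU) i where "i < k" "x = 5+3*i" | (XP) i where "d" "i < 3" "i < k" "x = 6+3*i"
          using x(1) dk by (auto simp: memY)
        then show "famE k d x (4+3*i)"
        proof cases
          case (XU i') thus ?thesis using x(2) \<open>s = 5+3*i\<close> \<open>i < k\<close> E_XY[of i k i' d] famE_sym by auto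
        next
          case (XP i') thus ?thesis using False \<open>i < k\<close> E_XP[of i k d i'] famE_sym by auto
        qed
      qed
      thus ?thesis using tX ne by blast
    next
      case True
      define i2 where "i2 = (i+2) mod 3"
      have i012: "i = 0 \<or> i = 1 \<or> i = 2" using True by auto
      have i2: "i2 < 3" "i2 \<noteq> i" "i = (i2 + 1) mod 3" "i2 < k" using mod3f[of i] True dk unfolding i2_def by auto
      define q where "q = 5+3*i2"
      have qY: "q \<in> famY k d" using i2 unfolding q_def by (auto simp: memY)
      have qs: "q \<noteq> s" using i2 SU unfolding q_def by auto
      have nsq: "\<not> famE k d s q" using SU E_YY unfolding q_def by auto
      have eqt: "famE k d q (4+3*i)" using i2 SU E_XY[of i k i2 d] famE_sym unfolding q_def by auto
      have cov: "\<forall>x\<in>famY k d. x \<noteq> s \<longrightarrow> famE k d x (4+3*i) \<or> famE k d x q"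
      proof (intro ballI impI)
        fix x assume x: "x \<in> famY k d" "x \<noteq> s"
        consider (XU) i where "i < k" "x = 5+3*i" | (XP) i where "d" "i < 3" "i < k" "x = 6+3*i"
          using x(1) dk by (auto simp: memY)
        then show "famE k d x (4+3*i) \<or> famE k d x q"
        proof cases
          case (XU i') thus ?thesis using x(2) \<open>s = 5+3*i\<close> \<open>i < k\<close> E_XY[of i k i' d] famE_sym by auto
        next
          case (XP i')
          show ?thesis
          proof (cases "i' = i")
            case True
            have "famE k d q x" using XP True i2 E_YP[of k d i2 i'] unfolding q_def by auto
            thus ?thesis using famE_sym by blast
          next
            case False
            thus ?thesis using XP \<open>i < k\<close> E_XP[of i k d i'] famE_sym by auto
          qed
        qed
      qed
      show ?thesis using tX ne qY qs nsq eqt cov by blast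
    qed
  next
    case (SP i)
    have tX: "4+3*i \<in> famX k" using SP by (auto simp: memX)
    have ne: "\<not> famE k d s (4+3*i)" using SP E_XP[of i k d i] famE_sym by auto
    define i1 where "i1 = (i+1) mod 3"
    have i1: "i1 < 3" "i1 \<noteq> i" "i1 < k" using SP dk mod3f[of i] unfolding i1_def by auto
    define q where "q = 6+3*i1"
    have qY: "q \<in> famY k d" using i1 SP unfolding q_def by (auto simp: memY)
    have qs: "q \<noteq> s" using i1 SP unfolding q_def by auto
    have nsq: "\<not> famE k d s q" using SP E_PP unfolding q_def by auto
    have eqt: "famE k d q (4+3*i)" using i1 SP E_XP[of i k d i1] famE_sym unfolding q_def by auto
    have cov: "\<forall>x\<in>famY k d. x \<noteq> s \<longrightarrow> famE k d x (4+3*i) \<or> famE k d x q"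
    proof (intro ballI impI)
      fix x assume x: "x \<in> famY k d" "x \<noteq> s"
      consider (XU) i where "i < k" "x = 5+3*i" | (XP) i where "d" "i < 3" "i < k" "x = 6+3*i"
        using x(1) dk by (auto simp: memY)
      then show "famE k d x (4+3*i) \<or> famE k d x q"
      proof cases
        case (XU i')
        show ?thesis
        proof (cases "i' = i")
          case True
          have "famE k d x q" using XU True SP E_YP[of k d i' i1] unfolding q_def i1_def by auto
          thus ?thesis by blast
        next
          case False
          thus ?thesis using XU SP E_XY[of i k i' d] famE_sym by auto
        qed
      next
        case (XP i')
        thus ?thesis using x(2) XP SP E_XP[of i k d i'] famE_sym by auto
      qed
    qed
    show ?thesis using tX ne qY qs nsq eqt cov by blast
  qed
  qed
qed

lemma fam_hb:
  assumes dk: "d \<longrightarrow> 3 \<le> k"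
  shows "\<forall>u\<in>famX k \<union> famY k d. \<exists>w\<in>famX k \<union> famY k d. w \<noteq> u \<and> \<not> famE k d u w"
proof
  fix u assume "u \<in> famX k \<union> famY k d"
  thus "\<exists>w\<in>famX k \<union> famY k d. w \<noteq> u \<and> \<not> famE k d u w"
  proof
    assume "u \<in> famX k"
    then obtain j where j: "j < k" "u = 4+3*j" by (auto simp: memX)
    thus ?thesis using E_XY[of j k j d] by (intro bexI[of _ "5+3*j"]) (auto simp: memY)
  next
    assume u: "u \<in> famY k d"
    then obtain i where "i < k" "\<not> famE k d (4+3*i) u" using famY_block[OF dk] by blast
    moreover have "4+3*i \<noteq> u" using u by (auto simp: memY)
    ultimately show ?thesis using famE_sym by (intro bexI[of _ "4+3*i"]) (auto simp: memX)
  qed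
qed


lemma card_famX: "card (famX k) = k"
  unfolding famX_def by (subst card_image) (auto simp: inj_on_def)

lemma card_famY: "card (famY k d) = k + (if d then 3 else 0)"
proof -
  have c1: "card ((\<lambda>i. 5+3*i) ` {..<k}) = k" by (subst card_image) (auto simp: inj_on_def)
  have c2: "card ((\<lambda>i::nat. 6+3*i) ` {..<3}) = 3" by (subst card_image) (auto simp: inj_on_def)
  have dj: "(\<lambda>i. 5+3*i) ` {..<k} \<inter> (\<lambda>i::nat. 6+3*i) ` {..<3} = {}" by auto
  show ?thesis
  proof (cases d)
    case True
    thus ?thesis unfolding famY_def using c1 c2 dj by (simp add: card_Un_disjoint)
  next
    case False
    thus ?thesis unfolding famY_def using c1 by simp
  qed
qed

lemma fam_exists:
  assumes dk: "d \<longrightarrow> 3 \<le> k" and k1: "1 \<le> k"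
  shows "\<exists>V E. simple_graph V E \<and> m_gamma_t_critical 4 V E \<and> card V = max_degree V E + 4
     \<and> max_degree V E = 2*k + (if d then 3 else 0) \<and> min_degree V E \<ge> 2"
proof -
  have st: "struct (famV k d) (famE k d) 0 1 2 3 (famX k) (famY k d)" by (rule fam_struct[OF dk])
  have "4 \<in> famX k" "5 \<in> famY k d" using k1 unfolding memX memY by (auto intro!: exI[of _ 0])
  hence ne: "famX k \<noteq> {}" "famY k d \<noteq> {}" by auto
  note R = suff[OF st fam_half1 fam_half2[OF dk] ne fam_hb[OF dk]]
  have dj: "famX k \<inter> famY k d = {}" using structD(9)[OF st] .
  have fin: "finite (famX k)" "finite (famY k d)" unfolding famX_def famY_def by auto
  have "card (famX k \<union> famY k d) = 2*k + (if d then 3 else 0)"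
    using card_Un_disjoint[OF fin dj] card_famX card_famY by simp
  thus ?thesis using R by metis
qed

definition critsets :: "nat set \<Rightarrow> (nat \<Rightarrow> nat \<Rightarrow> bool) \<Rightarrow> bool" where
  "critsets V E \<longleftrightarrow> (\<forall>x\<in>V. \<exists>S. S \<subseteq> V - {x} \<and> card S \<le> 3 \<and> (\<forall>w\<in>V - {x}. \<exists>u\<in>S. E w u) \<and> (\<forall>u\<in>S. \<not> E x u))"

definition noTDS3 :: "nat set \<Rightarrow> (nat \<Rightarrow> nat \<Rightarrow> bool) \<Rightarrow> bool" where
  "noTDS3 V E \<longleftrightarrow> (\<forall>S. total_dominating V E S \<longrightarrow> 4 \<le> card S)"

lemma two_nbrs:
  assumes "2 \<le> card {u \<in> V. E w u}"
  shows "\<exists>u. u \<in> V \<and> E w u \<and> u \<noteq> x"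
proof (rule ccontr)
  assume "\<not> ?thesis"
  hence "{u \<in> V. E w u} \<subseteq> {x}" by auto
  hence "card {u \<in> V. E w u} \<le> 1" using card_mono[of "{x}"] by fastforce
  thus False using assms by simp
qed

lemma nec_basic:
  assumes sg: "simple_graph V E" and crit: "m_gamma_t_critical 4 V E"
    and md: "min_degree V E \<ge> 2" and ne: "V \<noteq> {}"
  shows "noTDS3 V E" "critsets V E" "\<And>u. u \<in> V \<Longrightarrow> 2 \<le> degree V E u"
proof -
  have fV: "finite V" using sg unfolding simple_graph_def by blast
  have sym: "\<And>x y. E x y \<Longrightarrow> E y x" and irr: "\<And>x. \<not> E x x"
    and inV: "\<And>x y. E x y \<Longrightarrow> x \<in> V \<and> y \<in> V" using sg unfolding simple_graph_def by blast+
  have g4: "gamma_t V E = 4" using crit unfolding m_gamma_t_critical_def by blast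
  have gc: "gamma_t_critical V E" using crit unfolding m_gamma_t_critical_def by blast
  show deg: "\<And>u. u \<in> V \<Longrightarrow> 2 \<le> degree V E u"
  proof -
    fix u assume "u \<in> V"
    hence "min_degree V E \<le> degree V E u" unfolding min_degree_def using fV by simp
    thus "2 \<le> degree V E u" using md by linarith
  qed
  show nt: "noTDS3 V E" unfolding noTDS3_def using gamma_t_le g4 by metis
  show "critsets V E"
    unfolding critsets_def
  proof
    fix x assume xV: "x \<in> V"
    have noleaf: "\<not> (\<exists>u. E x u \<and> is_leaf V E u)"
      using deg unfolding is_leaf_def by fastforce
    have lt: "gamma_t (V - {x}) (del_vertex_edges E x) < 4"
      using gc xV noleaf g4 unfolding gamma_t_critical_def by auto
    have T0: "total_dominating (V - {x}) (del_vertex_edges E x) (V - {x})"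
      unfolding total_dominating_def del_vertex_edges_def
    proof (intro conjI ballI subset_refl)
      fix w assume w: "w \<in> V - {x}"
      obtain u where "u \<in> V" "E w u" "u \<noteq> x" using two_nbrs[of V E w x] deg[of w] w unfolding degree_def by auto
      thus "\<exists>u\<in>V - {x}. E w u \<and> w \<noteq> x \<and> u \<noteq> x" using w by auto
    qed
    obtain S where S: "total_dominating (V - {x}) (del_vertex_edges E x) S"
      "card S = gamma_t (V - {x}) (del_vertex_edges E x)"
      using gamma_t_witness[OF T0] by blast
    have Ssub: "S \<subseteq> V - {x}" using S(1) unfolding total_dominating_def by blast
    have Sdom: "\<forall>w\<in>V - {x}. \<exists>u\<in>S. E w u"
      using S(1) unfolding total_dominating_def del_vertex_edges_def by blast
    have c3: "card S \<le> 3" using S(2) lt by linarith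
    have nadj: "\<forall>u\<in>S. \<not> E x u"
    proof (rule ccontr)
      assume "\<not> (\<forall>u\<in>S. \<not> E x u)"
      then obtain u0 where u0: "u0 \<in> S" "E x u0" by blast
      have "total_dominating V E S"
        unfolding total_dominating_def
      proof (intro conjI ballI)
        show "S \<subseteq> V" using Ssub by blast
        fix w assume "w \<in> V"
        thus "\<exists>u\<in>S. E w u" using Sdom u0 by (cases "w = x") auto
      qed
      thus False using nt c3 unfolding noTDS3_def by fastforce
    qed
    show "\<exists>S. S \<subseteq> V - {x} \<and> card S \<le> 3 \<and> (\<forall>w\<in>V - {x}. \<exists>u\<in>S. E w u) \<and> (\<forall>u\<in>S. \<not> E x u)"
      using Ssub c3 Sdom nadj by blast
  qed
qed


lemma nec_struct:
  assumes sg: "simple_graph V E" and nt: "noTDS3 V E" and cs: "critsets V E"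
    and deg: "\<And>u. u \<in> V \<Longrightarrow> 2 \<le> degree V E u"
    and vV: "v \<in> V" and dv: "degree V E v = D" and cV: "card V = D + 4" and D1: "1 \<le> D"
  shows "\<exists>a b c X Y. struct V E v a b c X Y \<and> card (X \<union> Y) = D \<and> X \<noteq> {} \<and> Y \<noteq> {}"
proof -
  have fV: "finite V" using sg unfolding simple_graph_def by blast
  have sym: "\<And>x y. E x y \<Longrightarrow> E y x" and irr: "\<And>x. \<not> E x x"
    and inV: "\<And>x y. E x y \<Longrightarrow> x \<in> V \<and> y \<in> V" using sg unfolding simple_graph_def by blast+
  define N where "N = {u \<in> V. E v u}"
  define A where "A = V - N - {v}"
  have cN: "card N = D" using dv unfolding N_def degree_def by simp
  have NV: "N \<subseteq> V" unfolding N_def by auto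
  have vN: "v \<notin> N" unfolding N_def using irr by auto
  have fN: "finite N" using fV NV finite_subset by blast
  have cA: "card A = 3"
  proof -
    have "A = V - insert v N" unfolding A_def by auto
    moreover have "card (V - insert v N) = card V - card (insert v N)"
      using vV NV fV by (intro card_Diff_subset) (auto intro: finite_subset)
    moreover have "card (insert v N) = D + 1" using vN fN cN by simp
    ultimately show ?thesis using cV by simp
  qed
  have Vdec: "V = {v} \<union> N \<union> A" unfolding A_def using vV NV by auto
  have AN: "\<And>w. w \<in> A \<Longrightarrow> w \<in> V \<and> \<not> E v w \<and> w \<noteq> v" unfolding A_def N_def by auto
  have nEvA: "\<And>w. w \<in> A \<Longrightarrow> \<not> E w v" using AN sym by blast
  have NE: "\<And>u. u \<in> N \<longleftrightarrow> E v u" unfolding N_def using inV by auto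
  have "\<exists>S. S \<subseteq> V - {v} \<and> card S \<le> 3 \<and> (\<forall>w\<in>V - {v}. \<exists>u\<in>S. E w u) \<and> (\<forall>u\<in>S. \<not> E v u)"
    using cs vV unfolding critsets_def by (rule bspec)
  then obtain Sv where Sv: "Sv \<subseteq> V - {v}" "card Sv \<le> 3" "\<forall>w\<in>V - {v}. \<exists>u\<in>Sv. E w u" "\<forall>u\<in>Sv. \<not> E v u"
    by (elim exE conjE) (rule that)
  have SvA: "Sv \<subseteq> A"
  proof
    fix x assume x: "x \<in> Sv"
    hence "x \<in> V" "x \<noteq> v" using Sv(1) by auto
    moreover have "\<not> E v x" using Sv(4) x by blast
    ultimately show "x \<in> A" unfolding A_def N_def by auto
  qed
  have domA: "\<And>w. w \<in> V - {v} \<Longrightarrow> \<exists>u\<in>A. E w u" using Sv(3) SvA by blast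
  have fg: "\<And>u a'. u \<in> N \<Longrightarrow> a' \<in> A \<Longrightarrow> E u a' \<Longrightarrow> \<exists>w\<in>A. \<not> E w u \<and> \<not> E w a'"
  proof (rule ccontr)
    fix u a' assume u: "u \<in> N" and a': "a' \<in> A" and e: "E u a'" and nn: "\<not> (\<exists>w\<in>A. \<not> E w u \<and> \<not> E w a')"
    have "total_dominating V E {v,u,a'}"
      unfolding total_dominating_def
    proof (intro conjI ballI)
      show "{v,u,a'} \<subseteq> V" using vV u a' NV AN by auto
      fix z assume z: "z \<in> V"
      hence "z = v \<or> z \<in> N \<or> z \<in> A" using Vdec by auto
      thus "\<exists>x\<in>{v,u,a'}. E z x"
      proof (elim disjE)
        assume "z = v" thus ?thesis using u NE by auto
      next
        assume "z \<in> N" thus ?thesis using NE sym by auto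
      next
        assume "z \<in> A" thus ?thesis using nn by auto
      qed
    qed
    moreover have "card {v,u,a'} \<le> 3" by (rule card3)
    ultimately show False using nt unfolding noTDS3_def by fastforce
  qed
  obtain a1 a2 a3 where A3: "A = {a1,a2,a3}" "a1 \<noteq> a2" "a2 \<noteq> a3" "a1 \<noteq> a3"
    using cA card_3_iff by metis
  have inA: "a1 \<in> A" "a2 \<in> A" "a3 \<in> A" using A3 by auto
  have nb: "\<And>w. w \<in> A \<Longrightarrow> \<exists>u\<in>A. E w u" using domA AN by blast
  have n1: "E a1 a2 \<or> E a1 a3" using nb[OF inA(1)] A3 irr by auto
  have n2: "E a1 a2 \<or> E a2 a3" using nb[OF inA(2)] A3 irr sym by auto
  have n3: "E a1 a3 \<or> E a2 a3" using nb[OF inA(3)] A3 irr sym by auto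
  obtain a b c where abc: "A = {a,b,c}" "a \<noteq> b" "a \<noteq> c" "b \<noteq> c" "E c a" "E c b"
  proof -
    { assume "E a1 a2" "E a1 a3"
      hence ?thesis using that[of a2 a3 a1] A3 by auto }
    moreover
    { assume "E a1 a2" "E a2 a3"
      hence ?thesis using that[of a1 a3 a2] A3 sym by auto }
    moreover
    { assume "E a1 a3" "E a2 a3"
      hence ?thesis using that[of a1 a2 a3] A3 sym by auto }
    ultimately show ?thesis using n1 n2 n3 by blast
  qed
  have aA: "a \<in> A" "b \<in> A" "c \<in> A" using abc by auto
  have cN: "\<And>u. u \<in> N \<Longrightarrow> \<not> E u c"
  proof
    fix u assume u: "u \<in> N" and e: "E u c"
    obtain w where w: "w \<in> A" "\<not> E w u" "\<not> E w c" using fg[OF u aA(3) e] by blast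
    have "w = a \<or> w = b \<or> w = c" using w(1) abc by auto
    thus False using w e abc sym by auto
  qed
  have Ec: "\<And>u. E c u \<longleftrightarrow> u = a \<or> u = b"
  proof
    fix u assume e: "E c u"
    have uV: "u \<in> V" using inV e by blast
    have "u \<notin> N" using cN e sym by blast
    moreover have "u \<noteq> v" using e nEvA aA by auto
    ultimately have "u \<in> A" using uV Vdec by auto
    thus "u = a \<or> u = b" using abc irr e by auto
  next
    fix u assume "u = a \<or> u = b" thus "E c u" using abc by auto
  qed
  have Nne: "N \<noteq> {}" using cN D1 \<open>card N = D\<close> by auto
  have nab: "\<not> E a b"
  proof
    assume eab: "E a b"
    have noa: "\<And>u. u \<in> N \<Longrightarrow> \<not> E u a"
    proof
      fix u assume u: "u \<in> N" and e: "E u a"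
      obtain w where w: "w \<in> A" "\<not> E w u" "\<not> E w a" using fg[OF u aA(1) e] by blast
      have "w = a \<or> w = b \<or> w = c" using w(1) abc by auto
      thus False using w e abc sym eab by auto
    qed
    have nob: "\<And>u. u \<in> N \<Longrightarrow> \<not> E u b"
    proof
      fix u assume u: "u \<in> N" and e: "E u b"
      obtain w where w: "w \<in> A" "\<not> E w u" "\<not> E w b" using fg[OF u aA(2) e] by blast
      have "w = a \<or> w = b \<or> w = c" using w(1) abc by auto
      thus False using w e abc sym eab by auto
    qed
    obtain u where u: "u \<in> N" using Nne by blast
    have "u \<in> V - {v}" using u NV vN by auto
    then obtain w where "w \<in> A" "E u w" using domA by blast
    thus False using abc noa nob cN u by auto
  qed
  have Nab: "\<And>u. u \<in> N \<Longrightarrow> (E u a \<or> E u b) \<and> \<not> (E u a \<and> E u b)"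
  proof
    fix u assume u: "u \<in> N"
    have "u \<in> V - {v}" using u NV vN by auto
    then obtain w where "w \<in> A" "E u w" using domA by blast
    thus "E u a \<or> E u b" using abc cN u by auto
    show "\<not> (E u a \<and> E u b)"
    proof
      assume e: "E u a \<and> E u b"
      obtain w where w: "w \<in> A" "\<not> E w u" "\<not> E w a" using fg[OF u aA(1)] e by blast
      have "w = a \<or> w = b \<or> w = c" using w(1) abc by auto
      thus False using w e abc sym by auto
    qed
  qed
  define X where "X = {u \<in> N. E u a}"
  define Y where "Y = {u \<in> N. E u b}"
  have XY: "X \<union> Y = N" unfolding X_def Y_def using Nab by auto
  have dj: "X \<inter> Y = {}" unfolding X_def Y_def using Nab by auto
  have Ea: "\<And>u. E a u \<longleftrightarrow> u = c \<or> u \<in> X"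
  proof
    fix u assume e: "E a u"
    have uV: "u \<in> V" using inV e by blast
    have "u \<noteq> v" using e aA nEvA by auto
    hence "u \<in> N \<or> u \<in> A" using uV Vdec by auto
    thus "u = c \<or> u \<in> X"
    proof
      assume "u \<in> N" thus ?thesis unfolding X_def using e sym by auto
    next
      assume "u \<in> A" thus ?thesis using abc e nab irr by auto
    qed
  next
    fix u assume "u = c \<or> u \<in> X" thus "E a u" unfolding X_def using abc sym by auto
  qed
  have Eb: "\<And>u. E b u \<longleftrightarrow> u = c \<or> u \<in> Y"
  proof
    fix u assume e: "E b u"
    have uV: "u \<in> V" using inV e by blast
    have "u \<noteq> v" using e aA nEvA by auto
    hence "u \<in> N \<or> u \<in> A" using uV Vdec by auto
    thus "u = c \<or> u \<in> Y"
    proof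
      assume "u \<in> N" thus ?thesis unfolding Y_def using e sym by auto
    next
      assume "u \<in> A" thus ?thesis using abc e nab irr sym by auto
    qed
  next
    fix u assume "u = c \<or> u \<in> Y" thus "E b u" unfolding Y_def using abc sym by auto
  qed
  have Ev: "\<And>u. E v u \<longleftrightarrow> u \<in> X \<union> Y" using XY NE by auto
  have vA: "v \<notin> A" unfolding A_def by auto
  have AnN: "a \<notin> N" "b \<notin> N" "c \<notin> N" using aA unfolding A_def by auto
  have st: "struct V E v a b c X Y"
    unfolding struct_def
  proof (intro conjI)
    show "simple_graph V E" by (fact sg)
    show "V = {v,a,b,c} \<union> X \<union> Y" using Vdec abc XY by auto
    show "distinct [v,a,b,c]" using abc vA aA by auto
    show "X \<inter> Y = {}" by (fact dj)
    show "v \<notin> X \<union> Y" "a \<notin> X \<union> Y" "b \<notin> X \<union> Y" "c \<notin> X \<union> Y" using XY vN AnN by auto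
    show "\<forall>u. E v u \<longleftrightarrow> u \<in> X \<union> Y" using Ev by blast
    show "\<forall>u. E a u \<longleftrightarrow> u = c \<or> u \<in> X" using Ea by blast
    show "\<forall>u. E b u \<longleftrightarrow> u = c \<or> u \<in> Y" using Eb by blast
    show "\<forall>u. E c u \<longleftrightarrow> u = a \<or> u = b" using Ec by blast
  qed
  have Xne: "X \<noteq> {}"
  proof -
    have "2 \<le> card {u \<in> V. E a u}" using deg[of a] AN[OF aA(1)] unfolding degree_def by blast
    then obtain u where "u \<in> V" "E a u" "u \<noteq> c" using two_nbrs[of V E a c] by blast
    thus ?thesis using Ea by blast
  qed
  have Yne: "Y \<noteq> {}"
  proof -
    have "2 \<le> card {u \<in> V. E b u}" using deg[of b] AN[OF aA(2)] unfolding degree_def by blast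
    then obtain u where "u \<in> V" "E b u" "u \<noteq> c" using two_nbrs[of V E b c] by blast
    thus ?thesis using Eb by blast
  qed
  have cXY: "card (X \<union> Y) = D" using XY \<open>card N = D\<close> by simp
  show ?thesis
    by (rule exI[of _ a], rule exI[of _ b], rule exI[of _ c], rule exI[of _ X], rule exI[of _ Y])
       (intro conjI st cXY Xne Yne)
qed


lemma nec_half:
  assumes st: "struct V E v a b c X Y" and nt: "noTDS3 V E" and cs: "critsets V E"
  shows "half X Y E"
proof -
  note sd = structD[OF st] and ss = structS[OF st]
  have Vc: "\<And>z. z \<in> V \<Longrightarrow> z = v \<or> z = a \<or> z = b \<or> z = c \<or> z \<in> X \<or> z \<in> Y" using sd(2) by auto
  have notTDS: "\<And>S. S \<subseteq> V \<Longrightarrow> card S \<le> 3 \<Longrightarrow> \<forall>z\<in>V. \<exists>u\<in>S. E z u \<Longrightarrow> False"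
  proof -
    fix S assume "S \<subseteq> V" "card S \<le> 3" "\<forall>z\<in>V. \<exists>u\<in>S. E z u"
    hence "total_dominating V E S" unfolding total_dominating_def by blast
    thus False using nt \<open>card S \<le> 3\<close> unfolding noTDS3_def by fastforce
  qed
  have h1: "\<forall>p\<in>X. \<exists>t\<in>Y. \<not> E p t"
  proof
    fix p assume p: "p \<in> X"
    show "\<exists>t\<in>Y. \<not> E p t"
    proof (rule ccontr)
      assume "\<not> (\<exists>t\<in>Y. \<not> E p t)"
      hence all: "\<forall>t\<in>Y. E t p" using ss(1) by blast
      have "\<forall>z\<in>V. \<exists>u\<in>{a,c,p}. E z u"
      proof
        fix z assume "z \<in> V"
        hence "z = v \<or> z = a \<or> z = b \<or> z = c \<or> z \<in> X \<or> z \<in> Y" by (rule Vc)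
        thus "\<exists>u\<in>{a,c,p}. E z u" using p all sd(18-25) by auto
      qed
      moreover have "{a,c,p} \<subseteq> V" using p sd(2) by auto
      ultimately show False using notTDS card3 by blast
    qed
  qed
  have h2: "\<forall>p\<in>X. \<forall>t\<in>Y. E p t \<longrightarrow> (\<exists>y\<in>Y. \<not> E y p \<and> \<not> E y t)"
  proof (intro ballI impI)
    fix p t assume p: "p \<in> X" and t: "t \<in> Y" and e: "E p t"
    show "\<exists>y\<in>Y. \<not> E y p \<and> \<not> E y t"
    proof (rule ccontr)
      assume "\<not> (\<exists>y\<in>Y. \<not> E y p \<and> \<not> E y t)"
      hence all: "\<forall>y\<in>Y. E y p \<or> E y t" by blast
      have "\<forall>z\<in>V. \<exists>u\<in>{a,p,t}. E z u"
      proof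
        fix z assume "z \<in> V"
        hence "z = v \<or> z = a \<or> z = b \<or> z = c \<or> z \<in> X \<or> z \<in> Y" by (rule Vc)
        thus "\<exists>u\<in>{a,p,t}. E z u" using p t all sd(18-25) by auto
      qed
      moreover have "{a,p,t} \<subseteq> V" using p t sd(2) by auto
      ultimately show False using notTDS card3 by blast
    qed
  qed
  have h3: "\<forall>s\<in>X. \<exists>t\<in>Y. \<not> E s t \<and> ((\<forall>x\<in>X. x \<noteq> s \<longrightarrow> E x t) \<or>
       (\<exists>q\<in>X. q \<noteq> s \<and> \<not> E s q \<and> E q t \<and> (\<forall>x\<in>X. x \<noteq> s \<longrightarrow> E x t \<or> E x q)))"
  proof
    fix s assume s: "s \<in> X"
    have sV: "s \<in> V" using s sd(2) by auto
    have "\<exists>S. S \<subseteq> V - {s} \<and> card S \<le> 3 \<and> (\<forall>w\<in>V - {s}. \<exists>u\<in>S. E w u) \<and> (\<forall>u\<in>S. \<not> E s u)"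
      using cs sV unfolding critsets_def by (rule bspec)
    then obtain S where S: "S \<subseteq> V - {s}" "card S \<le> 3" "\<forall>w\<in>V - {s}. \<exists>u\<in>S. E w u" "\<forall>u\<in>S. \<not> E s u"
      by (elim exE conjE) (rule that)
    have fS: "finite S" using S(1) sd(1) finite_subset by blast
    have dom: "\<And>w. w \<in> V \<Longrightarrow> w \<noteq> s \<Longrightarrow> \<exists>u\<in>S. E w u" using S(3) by blast
    have sS: "s \<notin> S" using S(1) by blast
    have aS: "a \<notin> S" using S(4) s sd(23) by blast
    have cV: "c \<in> V" "a \<in> V" "v \<in> V" "b \<in> V" using sd(2) by auto
    have ns: "c \<noteq> s" "a \<noteq> s" "v \<noteq> s" "b \<noteq> s" using s sd by auto
    obtain u1 where "u1 \<in> S" "E c u1" using dom[OF cV(1) ns(1)] by blast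
    hence bS: "b \<in> S" using aS sd(21) by auto
    obtain p where p: "p \<in> S" "E v p" using dom[OF cV(3) ns(3)] by blast
    have pN: "p \<in> X \<union> Y" using p(2) sd(18) by blast
    show "\<exists>t\<in>Y. \<not> E s t \<and> ((\<forall>x\<in>X. x \<noteq> s \<longrightarrow> E x t) \<or>
       (\<exists>q\<in>X. q \<noteq> s \<and> \<not> E s q \<and> E q t \<and> (\<forall>x\<in>X. x \<noteq> s \<longrightarrow> E x t \<or> E x q)))"
    proof (cases "c \<in> S")
      case True
      have "b \<noteq> c" "b \<noteq> p" "c \<noteq> p" using pN sd by auto
      hence d: "distinct [b,c,p]" by simp
      have sub: "{b,c,p} \<subseteq> S" using bS True p by auto
      have inS: "\<And>w. w \<in> S \<Longrightarrow> w = b \<or> w = c \<or> w = p" using in3[OF fS S(2) sub d] by blast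
      have ps: "p \<noteq> s" using p(1) sS by blast
      have pV: "p \<in> V" using pN sd(2) by auto
      obtain w where w: "w \<in> S" "E p w" using dom[OF pV ps] by blast
      have "w = b \<or> w = c \<or> w = p" using inS w(1) by blast
      moreover have "\<not> E p c" using pN sd(25,12,13,14,15) by auto
      moreover have "\<not> E p p" using ss(2) by blast
      ultimately have "E p b" using w(2) by blast
      hence pY: "p \<in> Y" using sd(24) pN sd(16,17) by auto
      have nsp: "\<not> E s p" using S(4) p(1) by blast
      have allX: "\<forall>x\<in>X. x \<noteq> s \<longrightarrow> E x p"
      proof (intro ballI impI)
        fix x assume x: "x \<in> X" "x \<noteq> s"
        have xV: "x \<in> V" using x sd(2) by auto
        obtain w' where w': "w' \<in> S" "E x w'" using dom[OF xV x(2)] by blast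
        have "w' = b \<or> w' = c \<or> w' = p" using inS w'(1) by blast
        moreover have "\<not> E x b" using x(1) sd(9,24,16) by auto
        moreover have "\<not> E x c" using x(1) sd(25,12,14) by auto
        ultimately show "E x p" using w'(2) by blast
      qed
      show ?thesis using pY nsp allX by blast
    next
      case False
      have aV: "a \<in> V" using sd(2) by auto
      obtain q where q: "q \<in> S" "E a q" using dom[OF aV ns(2)] by blast
      have qX: "q \<in> X" using q sd(19) False by auto
      obtain t where t: "t \<in> S" "E b t" using dom[OF cV(4) ns(4)] by blast
      have tY: "t \<in> Y" using t sd(20) False by auto
      have "b \<noteq> q" "b \<noteq> t" "q \<noteq> t" using qX tY sd(9,14,15) by auto
      hence d: "distinct [b,q,t]" by simp
      have sub: "{b,q,t} \<subseteq> S" using bS q t by auto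
      have inS: "\<And>w. w \<in> S \<Longrightarrow> w = b \<or> w = q \<or> w = t" using in3[OF fS S(2) sub d] by blast
      have qs: "q \<noteq> s" using q(1) sS by blast
      have ts: "t \<noteq> s" using t(1) sS by blast
      have qV: "q \<in> V" using qX sd(2) by auto
      obtain w where w: "w \<in> S" "E q w" using dom[OF qV qs] by blast
      have "w = b \<or> w = q \<or> w = t" using inS w(1) by blast
      moreover have "\<not> E q b" using qX sd(9,24,16) by auto
      moreover have "\<not> E q q" using ss(2) by blast
      ultimately have eqt: "E q t" using w(2) by blast
      have nst: "\<not> E s t" using S(4) t(1) by blast
      have nsq: "\<not> E s q" using S(4) q(1) by blast
      have allX: "\<forall>x\<in>X. x \<noteq> s \<longrightarrow> E x t \<or> E x q"
      proof (intro ballI impI)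
        fix x assume x: "x \<in> X" "x \<noteq> s"
        have xV: "x \<in> V" using x sd(2) by auto
        obtain w' where w': "w' \<in> S" "E x w'" using dom[OF xV x(2)] by blast
        have "w' = b \<or> w' = q \<or> w' = t" using inS w'(1) by blast
        moreover have "\<not> E x b" using x(1) sd(9,24,16) by auto
        ultimately show "E x t \<or> E x q" using w'(2) by blast
      qed
      show ?thesis using tY nst qX qs nsq eqt allX by blast
    qed
  qed
  show ?thesis unfolding half_def using h1 h2 h3 by blast
qed

lemma t12:
  assumes sym: "\<And>x y. E x y \<Longrightarrow> E y x" and irr: "\<And>x. \<not> E x x"
  and h1: "half {x1} {y1,y2} E" and h2: "half {y1,y2} {x1} E"
  and d: "distinct [x1,y1,y2]"
  shows False
proof -
  have s: "\<And>x y. E x y = E y x" using sym by blast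
  have d2: "x1 \<noteq> y1" "x1 \<noteq> y2" "y1 \<noteq> x1" "y1 \<noteq> y2" "y2 \<noteq> x1" "y2 \<noteq> y1" using d by auto
  from h1 h2 show False unfolding half_def
    apply (simp add: s irr d2)
    by smt
qed

lemma t14:
  assumes sym: "\<And>x y. E x y \<Longrightarrow> E y x" and irr: "\<And>x. \<not> E x x"
  and h1: "half {x1} {y1,y2,y3,y4} E" and h2: "half {y1,y2,y3,y4} {x1} E"
  and d: "distinct [x1,y1,y2,y3,y4]"
  shows False
proof -
  have s: "\<And>x y. E x y = E y x" using sym by blast
  have d2: "x1 \<noteq> y1" "x1 \<noteq> y2" "x1 \<noteq> y3" "x1 \<noteq> y4" "y1 \<noteq> x1" "y1 \<noteq> y2" "y1 \<noteq> y3" "y1 \<noteq> y4" "y2 \<noteq> x1" "y2 \<noteq> y1" "y2 \<noteq> y3" "y2 \<noteq> y4" "y3 \<noteq> x1" "y3 \<noteq> y1" "y3 \<noteq> y2" "y3 \<noteq> y4" "y4 \<noteq> x1" "y4 \<noteq> y1" "y4 \<noteq> y2" "y4 \<noteq> y3" using d by auto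
  from h1 h2 show False unfolding half_def
    apply (simp add: s irr d2)
    by smt
qed

lemma t16:
  assumes sym: "\<And>x y. E x y \<Longrightarrow> E y x" and irr: "\<And>x. \<not> E x x"
  and h1: "half {x1} {y1,y2,y3,y4,y5,y6} E" and h2: "half {y1,y2,y3,y4,y5,y6} {x1} E"
  and d: "distinct [x1,y1,y2,y3,y4,y5,y6]"
  shows False
proof -
  have s: "\<And>x y. E x y = E y x" using sym by blast
  have d2: "x1 \<noteq> y1" "x1 \<noteq> y2" "x1 \<noteq> y3" "x1 \<noteq> y4" "x1 \<noteq> y5" "x1 \<noteq> y6" "y1 \<noteq> x1" "y1 \<noteq> y2" "y1 \<noteq> y3" "y1 \<noteq> y4" "y1 \<noteq> y5" "y1 \<noteq> y6" "y2 \<noteq> x1" "y2 \<noteq> y1" "y2 \<noteq> y3" "y2 \<noteq> y4" "y2 \<noteq> y5" "y2 \<noteq> y6" "y3 \<noteq> x1" "y3 \<noteq> y1" "y3 \<noteq> y2" "y3 \<noteq> y4" "y3 \<noteq> y5" "y3 \<noteq> y6" "y4 \<noteq> x1" "y4 \<noteq> y1" "y4 \<noteq> y2" "y4 \<noteq> y3" "y4 \<noteq> y5" "y4 \<noteq> y6" "y5 \<noteq> x1" "y5 \<noteq> y1" "y5 \<noteq> y2" "y5 \<noteq> y3" "y5 \<noteq> y4" "y5 \<noteq> y6" "y6 \<noteq> x1" "y6 \<noteq> y1" "y6 \<noteq> y2" "y6 \<noteq> y3" "y6 \<noteq> y4" "y6 \<noteq> y5" using d by auto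
  from h1 h2 show False unfolding half_def
    apply (simp add: s irr d2)
    by smt
qed

lemma t23:
  assumes sym: "\<And>x y. E x y \<Longrightarrow> E y x" and irr: "\<And>x. \<not> E x x"
  and h1: "half {x1,x2} {y1,y2,y3} E" and h2: "half {y1,y2,y3} {x1,x2} E"
  and d: "distinct [x1,x2,y1,y2,y3]"
  shows False
proof -
  have s: "\<And>x y. E x y = E y x" using sym by blast
  have d2: "x1 \<noteq> x2" "x1 \<noteq> y1" "x1 \<noteq> y2" "x1 \<noteq> y3" "x2 \<noteq> x1" "x2 \<noteq> y1" "x2 \<noteq> y2" "x2 \<noteq> y3" "y1 \<noteq> x1" "y1 \<noteq> x2" "y1 \<noteq> y2" "y1 \<noteq> y3" "y2 \<noteq> x1" "y2 \<noteq> x2" "y2 \<noteq> y1" "y2 \<noteq> y3" "y3 \<noteq> x1" "y3 \<noteq> x2" "y3 \<noteq> y1" "y3 \<noteq> y2" using d by auto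
  from h1 h2 show False unfolding half_def
    apply (simp add: s irr d2)
    by smt
qed

lemma t25:
  assumes sym: "\<And>x y. E x y \<Longrightarrow> E y x" and irr: "\<And>x. \<not> E x x"
  and h1: "half {x1,x2} {y1,y2,y3,y4,y5} E" and h2: "half {y1,y2,y3,y4,y5} {x1,x2} E"
  and d: "distinct [x1,x2,y1,y2,y3,y4,y5]"
  shows False
proof -
  have s: "\<And>x y. E x y = E y x" using sym by blast
  have d2: "x1 \<noteq> x2" "x1 \<noteq> y1" "x1 \<noteq> y2" "x1 \<noteq> y3" "x1 \<noteq> y4" "x1 \<noteq> y5" "x2 \<noteq> x1" "x2 \<noteq> y1" "x2 \<noteq> y2" "x2 \<noteq> y3" "x2 \<noteq> y4" "x2 \<noteq> y5" "y1 \<noteq> x1" "y1 \<noteq> x2" "y1 \<noteq> y2" "y1 \<noteq> y3" "y1 \<noteq> y4" "y1 \<noteq> y5" "y2 \<noteq> x1" "y2 \<noteq> x2" "y2 \<noteq> y1" "y2 \<noteq> y3" "y2 \<noteq> y4" "y2 \<noteq> y5" "y3 \<noteq> x1" "y3 \<noteq> x2" "y3 \<noteq> y1" "y3 \<noteq> y2" "y3 \<noteq> y4" "y3 \<noteq> y5" "y4 \<noteq> x1" "y4 \<noteq> x2" "y4 \<noteq> y1" "y4 \<noteq> y2" "y4 \<noteq> y3" "y4 \<noteq> y5" "y5 \<noteq> x1" "y5 \<noteq> x2" "y5 \<noteq> y1" "y5 \<noteq> y2" "y5 \<noteq> y3" "y5 \<noteq> y4" using d by auto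
  from h1 h2 show False unfolding half_def
    apply (simp add: s irr d2)
    by smt
qed

lemma t34:
  assumes sym: "\<And>x y. E x y \<Longrightarrow> E y x" and irr: "\<And>x. \<not> E x x"
  and h1: "half {x1,x2,x3} {y1,y2,y3,y4} E" and h2: "half {y1,y2,y3,y4} {x1,x2,x3} E"
  and d: "distinct [x1,x2,x3,y1,y2,y3,y4]"
  shows False
proof -
  have s: "\<And>x y. E x y = E y x" using sym by blast
  have d2: "x1 \<noteq> x2" "x1 \<noteq> x3" "x1 \<noteq> y1" "x1 \<noteq> y2" "x1 \<noteq> y3" "x1 \<noteq> y4" "x2 \<noteq> x1" "x2 \<noteq> x3" "x2 \<noteq> y1" "x2 \<noteq> y2" "x2 \<noteq> y3" "x2 \<noteq> y4" "x3 \<noteq> x1" "x3 \<noteq> x2" "x3 \<noteq> y1" "x3 \<noteq> y2" "x3 \<noteq> y3" "x3 \<noteq> y4" "y1 \<noteq> x1" "y1 \<noteq> x2" "y1 \<noteq> x3" "y1 \<noteq> y2" "y1 \<noteq> y3" "y1 \<noteq> y4" "y2 \<noteq> x1" "y2 \<noteq> x2" "y2 \<noteq> x3" "y2 \<noteq> y1" "y2 \<noteq> y3" "y2 \<noteq> y4" "y3 \<noteq> x1" "y3 \<noteq> x2" "y3 \<noteq> x3" "y3 \<noteq> y1" "y3 \<noteq> y2" "y3 \<noteq> y4" "y4 \<noteq> x1" "y4 \<noteq> x2" "y4 \<noteq> x3" "y4 \<noteq> y1" "y4 \<noteq> y2" "y4 \<noteq> y3" using d by auto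
  from h1 h2 show False unfolding half_def
    apply (simp add: s irr d2)
    by smt
qed

lemma len_ex:
  "length xs = 1 \<Longrightarrow> \<exists>a. xs = [a]"
  "length xs = 2 \<Longrightarrow> \<exists>a b. xs = [a,b]"
  "length xs = 3 \<Longrightarrow> \<exists>a b c. xs = [a,b,c]"
  "length xs = 4 \<Longrightarrow> \<exists>a b c d. xs = [a,b,c,d]"
  "length xs = 5 \<Longrightarrow> \<exists>a b c d e. xs = [a,b,c,d,e]"
  "length xs = 6 \<Longrightarrow> \<exists>a b c d e f. xs = [a,b,c,d,e,f]"
  by (auto simp: length_Suc_conv eval_nat_numeral)

lemma small_lt:
  assumes sym: "\<And>x y. E x y \<Longrightarrow> E y x" and irr: "\<And>x. \<not> E x x"
    and h1: "half X Y E" and h2: "half Y X E" and dj: "X \<inter> Y = {}"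
    and fin: "finite X" "finite Y" and ne: "X \<noteq> {}" "Y \<noteq> {}"
    and od: "odd (card X + card Y)" and le: "card X + card Y \<le> 7" and lt: "card X < card Y"
  shows False
proof -
  obtain xs where xs: "set xs = X" "distinct xs" using finite_distinct_list[OF fin(1)] by blast
  obtain ys where ys: "set ys = Y" "distinct ys" using finite_distinct_list[OF fin(2)] by blast
  have lx: "length xs = card X" using xs distinct_card by metis
  have ly: "length ys = card Y" using ys distinct_card by metis
  have dxy: "distinct (xs @ ys)" using xs ys dj by simp
  have h1': "half (set xs) (set ys) E" and h2': "half (set ys) (set xs) E" using h1 h2 xs ys by simp_all
  have cx: "1 \<le> card X" "1 \<le> card Y" using ne fin by (auto simp: Suc_le_eq card_gt_0_iff)
  have cases: "(card X = 1 \<and> card Y = 2) \<or> (card X = 1 \<and> card Y = 4) \<or> (card X = 1 \<and> card Y = 6)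
     \<or> (card X = 2 \<and> card Y = 3) \<or> (card X = 2 \<and> card Y = 5) \<or> (card X = 3 \<and> card Y = 4)"
    using od le lt cx by presburger
  thus False
  proof (elim disjE conjE)
    assume "card X = 1" "card Y = 2"
    then obtain x1 y1 y2 where "xs = [x1]" "ys = [y1,y2]" using len_ex lx ly by metis
    thus False using t12[of E, OF sym irr] h1' h2' dxy by simp
  next
    assume "card X = 1" "card Y = 4"
    then obtain x1 y1 y2 y3 y4 where "xs = [x1]" "ys = [y1,y2,y3,y4]" using len_ex lx ly by metis
    thus False using t14[of E, OF sym irr] h1' h2' dxy by simp
  next
    assume "card X = 1" "card Y = 6"
    then obtain x1 y1 y2 y3 y4 y5 y6 where "xs = [x1]" "ys = [y1,y2,y3,y4,y5,y6]" using len_ex lx ly by metis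
    thus False using t16[of E, OF sym irr] h1' h2' dxy by simp
  next
    assume "card X = 2" "card Y = 3"
    then obtain x1 x2 y1 y2 y3 where "xs = [x1,x2]" "ys = [y1,y2,y3]" using len_ex lx ly by metis
    thus False using t23[of E, OF sym irr] h1' h2' dxy by simp
  next
    assume "card X = 2" "card Y = 5"
    then obtain x1 x2 y1 y2 y3 y4 y5 where "xs = [x1,x2]" "ys = [y1,y2,y3,y4,y5]" using len_ex lx ly by metis
    thus False using t25[of E, OF sym irr] h1' h2' dxy by simp
  next
    assume "card X = 3" "card Y = 4"
    then obtain x1 x2 x3 y1 y2 y3 y4 where "xs = [x1,x2,x3]" "ys = [y1,y2,y3,y4]" using len_ex lx ly by metis
    thus False using t34[of E, OF sym irr] h1' h2' dxy by simp
  qed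
qed

lemma small:
  assumes sym: "\<And>x y. E x y \<Longrightarrow> E y x" and irr: "\<And>x. \<not> E x x"
    and h1: "half X Y E" and h2: "half Y X E" and dj: "X \<inter> Y = {}"
    and fin: "finite X" "finite Y" and ne: "X \<noteq> {}" "Y \<noteq> {}"
    and od: "odd (card X + card Y)" and le: "card X + card Y \<le> 7"
  shows False
proof (cases "card X < card Y")
  case True thus False using small_lt[OF sym irr h1 h2 dj fin ne od le] by blast
next
  case False
  hence "card Y < card X" using od by presburger
  moreover have "Y \<inter> X = {}" using dj by blast
  ultimately show False using small_lt[OF sym irr h2 h1 _ fin(2) fin(1) ne(2) ne(1)] od le by (simp add: add.commute)
qed

theorem mainTheorem7:
  fixes \<Delta> :: nat
  assumes "\<Delta> \<ge> 1"
  shows "(\<exists>V E. simple_graph V E \<and> m_gamma_t_critical 4 V E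
            \<and> card V = max_degree V E + 4 \<and> max_degree V E = \<Delta>
            \<and> min_degree V E \<ge> 2)
         \<longleftrightarrow> (\<Delta> \<in> {2, 4, 6, 8} \<or> \<Delta> \<ge> 9)"
proof
  assume "\<exists>V E. simple_graph V E \<and> m_gamma_t_critical 4 V E
            \<and> card V = max_degree V E + 4 \<and> max_degree V E = \<Delta>
            \<and> min_degree V E \<ge> 2"
  then obtain V E where sg: "simple_graph V E" and cr: "m_gamma_t_critical 4 V E"
    and cV: "card V = max_degree V E + 4" and mD: "max_degree V E = \<Delta>" and md: "min_degree V E \<ge> 2"
    by blast
  show "\<Delta> \<in> {2, 4, 6, 8} \<or> \<Delta> \<ge> 9"
  proof (rule ccontr)
    assume nc: "\<not> (\<Delta> \<in> {2, 4, 6, 8} \<or> \<Delta> \<ge> 9)"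
    have n: "\<Delta> \<noteq> 2" "\<Delta> \<noteq> 4" "\<Delta> \<noteq> 6" "\<Delta> \<noteq> 8" "\<Delta> < 9" using nc by auto
    have od: "odd \<Delta>" using n assms by presburger
    have le: "\<Delta> \<le> 7" using n by simp
    have fV: "finite V" using sg unfolding simple_graph_def by blast
    have ne: "V \<noteq> {}" using cV by auto
    have sym: "\<And>x y. E x y \<Longrightarrow> E y x" and irr: "\<And>x. \<not> E x x"
      using sg unfolding simple_graph_def by blast+
    note nb = nec_basic[OF sg cr md ne]
    have "max_degree V E \<in> degree V E ` V"
      unfolding max_degree_def using fV ne by (intro Max_in) auto
    then obtain v where vV: "v \<in> V" and dv: "degree V E v = \<Delta>" using mD by auto
    obtain a b c X Y where st: "struct V E v a b c X Y" and cXY: "card (X \<union> Y) = \<Delta>"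
      and Xne: "X \<noteq> {}" and Yne: "Y \<noteq> {}"
      using nec_struct[OF sg nb(1) nb(2) nb(3) vV dv _ assms] cV mD by metis
    have h1: "half X Y E" by (rule nec_half[OF st nb(1) nb(2)])
    have h2: "half Y X E" by (rule nec_half[OF struct_swap[OF st] nb(1) nb(2)])
    note sd = structD[OF st]
    have fX: "finite X" "finite Y" using fV sd(2) finite_subset by auto
    have "card X + card Y = \<Delta>" using cXY card_Un_disjoint[OF fX sd(9)] by simp
    thus False using small[OF sym irr h1 h2 sd(9) fX Xne Yne] od le by simp
  qed
next
  assume D: "\<Delta> \<in> {2, 4, 6, 8} \<or> \<Delta> \<ge> 9"
  show "\<exists>V E. simple_graph V E \<and> m_gamma_t_critical 4 V E
            \<and> card V = max_degree V E + 4 \<and> max_degree V E = \<Delta>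
            \<and> min_degree V E \<ge> 2"
  proof (cases "even \<Delta>")
    case True
    define k where "k = \<Delta> div 2"
    have k: "1 \<le> k" "2*k + (if False then 3 else 0) = \<Delta>" using True assms unfolding k_def by auto
    show ?thesis using fam_exists[of False k] k by auto
  next
    case False
    have D9: "\<Delta> \<ge> 9" using D False by auto
    define k where "k = (\<Delta> - 3) div 2"
    have k: "3 \<le> k" "1 \<le> k" "2*k + (if True then 3 else 0) = \<Delta>" using False D9 unfolding k_def by presburger+
    show ?thesis using fam_exists[of True k] k by auto
  qed
qed

end
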